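(* Let $n\ge1$, $0<\epsilon\le1$, $0\le\tau<1$, and let $G=(V,E)$ be a comparison graph with $|E|\ge1$. Let $P$ be a distribution on $[n]$ with $\|P-U_n\|\ge\epsilon$ and $|E|(\mu_P-\mu_P^2)< c(G)(\gamma_P-\mu_P^2)$. If $c(G)\le \dfrac{|E|^2(1-\tau)^2\epsilon^2}{16\sqrt n}$, then the collision-based algorithm $(G,\tau)$ outputs YES on $P$ with probability at most $1/4$.
   Context: $U_n$ is the uniform distribution on $[n]$; $\|P-Q\|=\sum_i|P_i-Q_i|$. $\mu_P=\sum_iP_i^2$, $\gamma_P=\sum_iP_i^3$. A comparison graph is a finite simple undirected graph $G=(V,E)$; $c(G)$ is the number of ordered triples $(u,v,w)$ of distinct vertices with $\{u,v\},\{v,w\}\in E$. Given $P$, each vertex $v$ receives an independent sample $S(v)\sim P$; for $e=\{u,v\}\in E$, $\mathbf 1_e=\mathbf 1[S(u)=S(v)]$; $Z=\sum_{e\in E}\mathbf 1_e$ and $T=|E|\frac{1+\tau\epsilon^2}{n}$; the algorithm $(G,\tau)$ outputs YES if $Z<T$ and NO otherwise. *)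

theory Defs
  imports Main "HOL-Library.FuncSet" Complex_Main
begin

definition comparison_graph :: "'a set \<Rightarrow> 'a set set \<Rightarrow> bool" where
  "comparison_graph V E \<longleftrightarrow> finite V \<and>
     (\<forall>e\<in>E. \<exists>u v. u \<in> V \<and> v \<in> V \<and> u \<noteq> v \<and> e = {u, v})"

definition cG :: "'a set \<Rightarrow> 'a set set \<Rightarrow> nat" where
  "cG V E = card {(u, v, w). u \<in> V \<and> v \<in> V \<and> w \<in> V \<and> u \<noteq> v \<and> v \<noteq> w \<and> u \<noteq> w
                 \<and> {u, v} \<in> E \<and> {v, w} \<in> E}"

definition is_distr :: "nat \<Rightarrow> (nat \<Rightarrow> real) \<Rightarrow> bool" where
  "is_distr n P \<longleftrightarrow> (\<forall>i\<in>{1..n}. P i \<ge> 0) \<and> (\<Sum>i\<in>{1..n}. P i) = 1"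

definition dist_unif :: "nat \<Rightarrow> (nat \<Rightarrow> real) \<Rightarrow> real" where
  "dist_unif n P = (\<Sum>i\<in>{1..n}. \<bar>P i - 1 / real n\<bar>)"

definition muP :: "nat \<Rightarrow> (nat \<Rightarrow> real) \<Rightarrow> real" where
  "muP n P = (\<Sum>i\<in>{1..n}. P i ^ 2)"

definition gammaP :: "nat \<Rightarrow> (nat \<Rightarrow> real) \<Rightarrow> real" where
  "gammaP n P = (\<Sum>i\<in>{1..n}. P i ^ 3)"

definition collisions :: "'a set set \<Rightarrow> ('a \<Rightarrow> nat) \<Rightarrow> nat" where
  "collisions E S = card {e \<in> E. \<forall>x\<in>e. \<forall>y\<in>e. S x = S y}"

definition outputs_yes :: "nat \<Rightarrow> real \<Rightarrow> real \<Rightarrow> 'a set set \<Rightarrow> ('a \<Rightarrow> nat) \<Rightarrow> bool" where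
  "outputs_yes n \<tau> \<epsilon> E S \<longleftrightarrow>
     real (collisions E S) < real (card E) * (1 + \<tau> * \<epsilon>^2) / real n"

definition prob_yes :: "nat \<Rightarrow> (nat \<Rightarrow> real) \<Rightarrow> real \<Rightarrow> real \<Rightarrow> 'a set \<Rightarrow> 'a set set \<Rightarrow> real" where
  "prob_yes n P \<tau> \<epsilon> V E =
     (\<Sum>S\<in>(V \<rightarrow>\<^sub>E {1..n}). if outputs_yes n \<tau> \<epsilon> E S then (\<Prod>v\<in>V. P (S v)) else 0)"

end

theory Submission
  imports Defs
begin


lemma prodB:
  fixes P :: "nat \<Rightarrow> real"
  assumes V: "finite V" and D: "D \<subseteq> V" and g: "\<forall>x\<in>D. g x \<in> {1..n}"
    and sP: "sum P {1..n} = 1"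
  shows "(\<Sum>S\<in>V \<rightarrow>\<^sub>E {1..n}. (\<Prod>v\<in>V. P (S v)) * (\<Prod>x\<in>D. if S x = g x then 1 else 0))
        = (\<Prod>x\<in>D. P (g x))"
proof -
  have D': "V \<inter> D = D" using D by blast
  have "\<And>S. (\<Prod>v\<in>V. P (S v)) * (\<Prod>x\<in>D. if S x = g x then 1 else 0)
        = (\<Prod>v\<in>V. P (S v) * (if v \<in> D then (if S v = g v then 1 else 0) else 1))"
  proof -
    fix S
    have "(\<Prod>x\<in>D. if S x = g x then 1 else (0::real))
       = (\<Prod>v\<in>V. (if v \<in> D then (if S v = g v then 1 else 0) else 1))"
      using prod.inter_restrict[OF V, of "\<lambda>x. if S x = g x then 1 else (0::real)" D] D' by simp
    then show "?thesis S" by (simp add: prod.distrib)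
  qed
  then have "(\<Sum>S\<in>V \<rightarrow>\<^sub>E {1..n}. (\<Prod>v\<in>V. P (S v)) * (\<Prod>x\<in>D. if S x = g x then 1 else 0))
     = (\<Sum>S\<in>V \<rightarrow>\<^sub>E {1..n}. (\<Prod>v\<in>V. P (S v) * (if v \<in> D then (if S v = g v then 1 else 0) else 1)))"
    by simp
  also have "\<dots> = (\<Prod>v\<in>V. \<Sum>k\<in>{1..n}. P k * (if v \<in> D then (if k = g v then 1 else 0) else 1))"
    using prod_sum_PiE[OF V, of "\<lambda>_. {1..n}" "\<lambda>v k. P k * (if v \<in> D then (if k = g v then 1 else 0) else 1)"]
    by simp
  also have "\<dots> = (\<Prod>v\<in>V. if v \<in> D then P (g v) else 1)"
  proof (rule prod.cong[OF refl])
    fix v assume "v \<in> V"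
    show "(\<Sum>k\<in>{1..n}. P k * (if v \<in> D then (if k = g v then 1 else 0) else 1)) = (if v \<in> D then P (g v) else 1)"
    proof (cases "v \<in> D")
      case True
      have "(\<Sum>k\<in>{1..n}. P k * (if k = g v then 1 else 0)) = (\<Sum>k\<in>{1..n}. if k = g v then P k else 0)"
        by (rule sum.cong) auto
      also have "\<dots> = P (g v)" using g True by (simp add: sum.delta')
      finally show ?thesis using True by simp
    next
      case False then show ?thesis using sP by simp
    qed
  qed
  also have "\<dots> = (\<Prod>x\<in>D. P (g x))"
    using prod.inter_restrict[OF V, of "\<lambda>x. P (g x)" D] D' by simp
  finally show ?thesis .
qed

lemma sum_w:
  fixes P :: "nat \<Rightarrow> real"
  assumes V: "finite V" and sP: "sum P {1..n} = 1"
  shows "(\<Sum>S\<in>V \<rightarrow>\<^sub>E {1..n}. (\<Prod>v\<in>V. P (S v))) = 1"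
  using prod_sum_PiE[OF V, of "\<lambda>_. {1..n}" "\<lambda>v k. P k"] sP by simp

definition coll :: "'a set \<Rightarrow> ('a \<Rightarrow> nat) \<Rightarrow> bool" where
  "coll e S \<longleftrightarrow> (\<forall>x\<in>e. \<forall>y\<in>e. S x = S y)"

definition Zi :: "'a set \<Rightarrow> ('a \<Rightarrow> nat) \<Rightarrow> real" where
  "Zi e S = (if coll e S then 1 else 0)"

lemma prod_ind:
  assumes "finite e"
  shows "(\<Prod>x\<in>e. if S x = i then 1 else (0::real)) = (if \<forall>x\<in>e. S x = i then 1 else 0)"
  using assms by (induction e rule: finite_induct) auto

lemma Zi_sum:
  assumes e: "finite e" "e \<noteq> {}" "e \<subseteq> V" and S: "S \<in> V \<rightarrow>\<^sub>E {1..n}"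
  shows "Zi e S = (\<Sum>i\<in>{1..n}. \<Prod>x\<in>e. if S x = i then 1 else 0)"
proof -
  obtain x0 where x0: "x0 \<in> e" using e by blast
  have Sx0: "S x0 \<in> {1..n}" using S x0 e by auto
  have "(\<Sum>i\<in>{1..n}. \<Prod>x\<in>e. if S x = i then 1 else (0::real))
      = (\<Sum>i\<in>{1..n}. if \<forall>x\<in>e. S x = i then 1 else 0)"
    by (rule sum.cong[OF refl], rule prod_ind[OF e(1)])
  also have "\<dots> = Zi e S"
  proof (cases "coll e S")
    case True
    have "(\<forall>x\<in>e. S x = i) \<longleftrightarrow> i = S x0" for i
    proof
      assume "\<forall>x\<in>e. S x = i" then show "i = S x0" using x0 by simp
    next
      assume "i = S x0" then show "\<forall>x\<in>e. S x = i" using True x0 unfolding coll_def by blast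
    qed
    then have "(\<Sum>i\<in>{1..n}. if \<forall>x\<in>e. S x = i then 1 else (0::real)) = (\<Sum>i\<in>{1..n}. if i = S x0 then 1 else 0)"
      by simp
    also have "\<dots> = 1" using Sx0 by (simp add: sum.delta')
    finally show ?thesis using True unfolding Zi_def by simp
  next
    case False
    obtain x y where xy: "x \<in> e" "y \<in> e" "S x \<noteq> S y" using False unfolding coll_def by blast
    have "\<not> (\<forall>x\<in>e. S x = i)" for i using xy by metis
    then show ?thesis using False unfolding Zi_def by (intro trans[OF sum.neutral]) auto
  qed
  finally show ?thesis by simp
qed

lemma Zi_union:
  assumes "e \<inter> f \<noteq> {}"
  shows "Zi e S * Zi f S = Zi (e \<union> f) S"
proof -
  have "coll e S \<and> coll f S \<longleftrightarrow> coll (e \<union> f) S"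
  proof
    assume h: "coll e S \<and> coll f S"
    obtain z where z: "z \<in> e" "z \<in> f" using assms by blast
    have "\<forall>x\<in>e \<union> f. S x = S z" using h z unfolding coll_def by blast
    then show "coll (e \<union> f) S" unfolding coll_def by simp
  next
    assume "coll (e \<union> f) S" then show "coll e S \<and> coll f S" unfolding coll_def by blast
  qed
  then show ?thesis unfolding Zi_def by auto
qed



lemma sum_sq_shift:
  fixes f :: "nat \<Rightarrow> real"
  shows "(\<Sum>i\<in>{1..n}. (f i - c)^2) = (\<Sum>i\<in>{1..n}. (f i)^2) - 2 * c * (\<Sum>i\<in>{1..n}. f i) + real n * c^2"
proof -
  have "(\<Sum>i\<in>{1..n}. (f i - c)^2) = (\<Sum>i\<in>{1..n}. (f i)^2 + (- (2 * c)) * f i + c^2)"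
    by (rule sum.cong[OF refl]) (simp add: power2_eq_square algebra_simps)
  also have "\<dots> = (\<Sum>i\<in>{1..n}. (f i)^2) + (- (2 * c)) * (\<Sum>i\<in>{1..n}. f i) + real n * c^2"
    unfolding sum.distrib sum_distrib_left[symmetric] by simp
  finally show ?thesis by simp
qed

lemma sum_cube_shift:
  fixes D :: "nat \<Rightarrow> real"
  shows "(\<Sum>i\<in>{1..n}. (c + D i)^3) = real n * c^3 + 3 * c^2 * (\<Sum>i\<in>{1..n}. D i) + 3 * c * (\<Sum>i\<in>{1..n}. (D i)^2) + (\<Sum>i\<in>{1..n}. (D i)^3)"
proof -
  have "(\<Sum>i\<in>{1..n}. (c + D i)^3) = (\<Sum>i\<in>{1..n}. c^3 + (3 * c^2) * D i + (3 * c) * (D i)^2 + (D i)^3)"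
    by (rule sum.cong[OF refl]) (simp add: power3_eq_cube power2_eq_square algebra_simps)
  also have "\<dots> = real n * c^3 + 3 * c^2 * (\<Sum>i\<in>{1..n}. D i) + 3 * c * (\<Sum>i\<in>{1..n}. (D i)^2) + (\<Sum>i\<in>{1..n}. (D i)^3)"
    unfolding sum.distrib sum_distrib_left[symmetric] by simp
  finally show ?thesis .
qed

lemma analytic:
  fixes P :: "nat \<Rightarrow> real"
  assumes n: "n \<ge> 1" and d: "is_distr n P"
  defines "\<delta> \<equiv> muP n P - 1 / real n"
  shows "\<delta> \<ge> (dist_unif n P)^2 / real n"
    and "gammaP n P - (muP n P)^2 \<le> \<delta> / real n + sqrt \<delta> * \<delta>"
    and "muP n P \<le> 1"
proof -
  define c where "c = 1 / real n"
  define D where "D i = P i - c" for i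
  have nr: "real n > 0" using n by simp
  have nc: "real n * c = 1" using nr by (simp add: c_def)
  have sP: "(\<Sum>i\<in>{1..n}. P i) = 1" and P0: "\<And>i. i \<in> {1..n} \<Longrightarrow> P i \<ge> 0"
    using d unfolding is_distr_def by auto
  have sD: "(\<Sum>i\<in>{1..n}. D i) = 0"
    unfolding D_def sum_subtractf sP by (simp add: nc)
  have dl: "\<delta> = (\<Sum>i\<in>{1..n}. (D i)^2)"
    unfolding D_def sum_sq_shift sP \<delta>_def muP_def c_def using nr by (simp add: power2_eq_square)
  have d0: "(D i)^2 \<le> \<delta>" if "i \<in> {1..n}" for i
    unfolding dl by (rule member_le_sum[OF that]) simp_all
  have dge: "\<delta> \<ge> 0" unfolding dl by (rule sum_nonneg) simp
  \<comment> \<open>Cauchy-Schwarz\<close>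
  define L where "L = (\<Sum>i\<in>{1..n}. \<bar>D i\<bar>)"
  have "0 \<le> (\<Sum>i\<in>{1..n}. (\<bar>D i\<bar> - L / real n)^2)" by (rule sum_nonneg) simp
  also have "\<dots> = \<delta> - L^2 / real n"
    unfolding sum_sq_shift dl L_def[symmetric] using nr by (simp add: power2_eq_square field_simps)
  finally have "L^2 / real n \<le> \<delta>" by simp
  moreover have "L = dist_unif n P" unfolding L_def D_def dist_unif_def c_def ..
  ultimately show "\<delta> \<ge> (dist_unif n P)^2 / real n" by simp
  have cube: "(D i)^3 \<le> sqrt \<delta> * (D i)^2" if "i \<in> {1..n}" for i
  proof -
    have "\<bar>D i\<bar> \<le> sqrt \<delta>" using real_sqrt_le_mono[OF d0[OF that]] by simp
    then have "\<bar>D i\<bar> * (D i)^2 \<le> sqrt \<delta> * (D i)^2" by (rule mult_right_mono) simp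
    moreover have "D i * (D i)^2 \<le> \<bar>D i\<bar> * (D i)^2" by (rule mult_right_mono) simp_all
    moreover have "(D i)^3 = D i * (D i)^2" by (simp add: power3_eq_cube power2_eq_square)
    ultimately show ?thesis by linarith
  qed
  have "(\<Sum>i\<in>{1..n}. (D i)^3) \<le> (\<Sum>i\<in>{1..n}. sqrt \<delta> * (D i)^2)" by (rule sum_mono) (rule cube)
  also have "\<dots> = sqrt \<delta> * \<delta>" unfolding dl by (simp add: sum_distrib_left)
  finally have s3: "(\<Sum>i\<in>{1..n}. (D i)^3) \<le> sqrt \<delta> * \<delta>" .
  have Pc: "P i = c + D i" for i unfolding D_def by simp
  have g: "gammaP n P = c^2 + 3 * c * \<delta> + (\<Sum>i\<in>{1..n}. (D i)^3)"
    unfolding gammaP_def Pc sum_cube_shift sD dl using nr by (simp add: c_def power2_eq_square power3_eq_cube)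
  have m: "muP n P = c + \<delta>" unfolding \<delta>_def c_def by simp
  show "gammaP n P - (muP n P)^2 \<le> \<delta> / real n + sqrt \<delta> * \<delta>"
  proof -
    have "gammaP n P - (muP n P)^2 = c * \<delta> + (\<Sum>i\<in>{1..n}. (D i)^3) - \<delta>^2"
      unfolding g m by (simp add: power2_eq_square algebra_simps)
    also have "\<dots> \<le> c * \<delta> + sqrt \<delta> * \<delta>" using s3 zero_le_power2[of \<delta>] by linarith
    finally show ?thesis by (simp add: c_def)
  qed
  have "muP n P \<le> (\<Sum>i\<in>{1..n}. P i)" unfolding muP_def
  proof (rule sum_mono)
    fix i assume i: "i \<in> {1..n}"
    have "P i \<le> 1" using member_le_sum[OF i, of P] P0 sP by simp
    then show "P i ^ 2 \<le> P i" using P0[OF i] by (simp add: power2_eq_square mult_left_le)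
  qed
  then show "muP n P \<le> 1" using sP by simp
qed



lemma E_Zi:
  fixes P :: "nat \<Rightarrow> real"
  assumes V: "finite V" and e: "e \<subseteq> V" "e \<noteq> {}" and sP: "sum P {1..n} = 1"
  shows "(\<Sum>S\<in>V \<rightarrow>\<^sub>E {1..n}. (\<Prod>v\<in>V. P (S v)) * Zi e S) = (\<Sum>i\<in>{1..n}. P i ^ card e)"
proof -
  have fe: "finite e" using V e finite_subset by blast
  have "(\<Sum>S\<in>V \<rightarrow>\<^sub>E {1..n}. (\<Prod>v\<in>V. P (S v)) * Zi e S)
      = (\<Sum>S\<in>V \<rightarrow>\<^sub>E {1..n}. \<Sum>i\<in>{1..n}. (\<Prod>v\<in>V. P (S v)) * (\<Prod>x\<in>e. if S x = i then 1 else 0))"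
    by (rule sum.cong[OF refl]) (simp add: Zi_sum[OF fe e(2) e(1)] sum_distrib_left)
  also have "\<dots> = (\<Sum>i\<in>{1..n}. \<Sum>S\<in>V \<rightarrow>\<^sub>E {1..n}. (\<Prod>v\<in>V. P (S v)) * (\<Prod>x\<in>e. if S x = i then 1 else 0))"
    by (rule sum.swap)
  also have "\<dots> = (\<Sum>i\<in>{1..n}. \<Prod>x\<in>e. P i)"
    by (rule sum.cong[OF refl]) (rule prodB[OF V e(1) _ sP], simp)
  finally show ?thesis by simp
qed

lemma E_Zi2:
  fixes P :: "nat \<Rightarrow> real"
  assumes V: "finite V" and e: "e \<subseteq> V" "e \<noteq> {}" and f: "f \<subseteq> V" "f \<noteq> {}"
    and ef: "e \<inter> f = {}" and sP: "sum P {1..n} = 1"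
  shows "(\<Sum>S\<in>V \<rightarrow>\<^sub>E {1..n}. (\<Prod>v\<in>V. P (S v)) * (Zi e S * Zi f S))
      = (\<Sum>i\<in>{1..n}. P i ^ card e) * (\<Sum>j\<in>{1..n}. P j ^ card f)"
proof -
  have fe: "finite e" using V e finite_subset by blast
  have ff: "finite f" using V f finite_subset by blast
  define g where "g i j x = (if x \<in> e then i else (j::nat))" for i j x
  have split: "(\<Prod>x\<in>e \<union> f. h (g i j x)) = (\<Prod>x\<in>e. h i) * (\<Prod>x\<in>f. h j)" for h :: "nat \<Rightarrow> real" and i j
  proof -
    have "(\<Prod>x\<in>e \<union> f. h (g i j x)) = (\<Prod>x\<in>e. h (g i j x)) * (\<Prod>x\<in>f. h (g i j x))"
      by (rule prod.union_disjoint[OF fe ff ef])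
    also have "(\<Prod>x\<in>e. h (g i j x)) = (\<Prod>x\<in>e. h i)" by (rule prod.cong) (auto simp: g_def)
    also have "(\<Prod>x\<in>f. h (g i j x)) = (\<Prod>x\<in>f. h j)" using ef by (intro prod.cong) (auto simp: g_def)
    finally show ?thesis .
  qed
  have split2: "(\<Prod>x\<in>e \<union> f. if S x = g i j x then 1 else (0::real))
      = (\<Prod>x\<in>e. if S x = i then 1 else 0) * (\<Prod>x\<in>f. if S x = j then 1 else 0)" for S i j
  proof -
    have "(\<Prod>x\<in>e \<union> f. if S x = g i j x then 1 else (0::real))
      = (\<Prod>x\<in>e. if S x = g i j x then 1 else (0::real)) * (\<Prod>x\<in>f. if S x = g i j x then 1 else (0::real))"
      by (rule prod.union_disjoint[OF fe ff ef])
    also have "(\<Prod>x\<in>e. if S x = g i j x then 1 else (0::real)) = (\<Prod>x\<in>e. if S x = i then 1 else 0)" by (rule prod.cong) (auto simp: g_def)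
    also have "(\<Prod>x\<in>f. if S x = g i j x then 1 else (0::real)) = (\<Prod>x\<in>f. if S x = j then 1 else 0)" using ef by (intro prod.cong) (auto simp: g_def)
    finally show ?thesis .
  qed
  have "(\<Sum>S\<in>V \<rightarrow>\<^sub>E {1..n}. (\<Prod>v\<in>V. P (S v)) * (Zi e S * Zi f S))
      = (\<Sum>S\<in>V \<rightarrow>\<^sub>E {1..n}. \<Sum>i\<in>{1..n}. \<Sum>j\<in>{1..n}. (\<Prod>v\<in>V. P (S v)) * (\<Prod>x\<in>e \<union> f. if S x = g i j x then 1 else 0))"
    by (rule sum.cong[OF refl]) (simp add: Zi_sum[OF fe e(2) e(1)] Zi_sum[OF ff f(2) f(1)] sum_distrib_left sum_distrib_right split2 mult.assoc, rule sum.swap)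
  also have "\<dots> = (\<Sum>i\<in>{1..n}. \<Sum>S\<in>V \<rightarrow>\<^sub>E {1..n}. \<Sum>j\<in>{1..n}. (\<Prod>v\<in>V. P (S v)) * (\<Prod>x\<in>e \<union> f. if S x = g i j x then 1 else 0))"
    by (rule sum.swap)
  also have "\<dots> = (\<Sum>i\<in>{1..n}. \<Sum>j\<in>{1..n}. \<Sum>S\<in>V \<rightarrow>\<^sub>E {1..n}. (\<Prod>v\<in>V. P (S v)) * (\<Prod>x\<in>e \<union> f. if S x = g i j x then 1 else 0))"
    by (rule sum.cong[OF refl]) (rule sum.swap)
  also have "\<dots> = (\<Sum>i\<in>{1..n}. \<Sum>j\<in>{1..n}. \<Prod>x\<in>e \<union> f. P (g i j x))"
    apply (rule sum.cong[OF refl])+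
    apply (rule prodB[OF V _ _ sP])
    using e f by (auto simp: g_def)
  also have "\<dots> = (\<Sum>i\<in>{1..n}. \<Sum>j\<in>{1..n}. P i ^ card e * P j ^ card f)"
    by (simp add: split[of P])
  also have "\<dots> = (\<Sum>i\<in>{1..n}. P i ^ card e) * (\<Sum>j\<in>{1..n}. P j ^ card f)"
    by (simp add: sum_distrib_left sum_distrib_right, rule sum.swap)
  finally show ?thesis .
qed



lemma edge_ex:
  assumes G: "comparison_graph V E" and e: "e \<in> E"
  obtains a b where "a \<in> V" "b \<in> V" "a \<noteq> b" "e = {a, b}"
proof -
  have "\<forall>e\<in>E. \<exists>u v. u \<in> V \<and> v \<in> V \<and> u \<noteq> v \<and> e = {u, v}"
    using G unfolding comparison_graph_def by (rule conjunct2)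
  then have "\<exists>u v. u \<in> V \<and> v \<in> V \<and> u \<noteq> v \<and> e = {u, v}" using e by (rule bspec)
  then show ?thesis using that by (elim exE conjE)
qed

lemma graph_facts:
  assumes G: "comparison_graph V E"
  shows "finite V" "finite E" "\<And>e. e \<in> E \<Longrightarrow> e \<subseteq> V \<and> e \<noteq> {} \<and> card e = 2"
proof -
  show fV: "finite V" using G unfolding comparison_graph_def by (rule conjunct1)
  show 3: "e \<subseteq> V \<and> e \<noteq> {} \<and> card e = 2" if eE: "e \<in> E" for e
  proof -
    obtain u v where "u \<in> V" "v \<in> V" "u \<noteq> v" "e = {u, v}" by (rule edge_ex[OF G eE])
    then show ?thesis by simp
  qed
  have "E \<subseteq> Pow V"
  proof
    fix e assume "e \<in> E" then show "e \<in> Pow V" using 3 by simp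
  qed
  then show "finite E" using fV finite_Pow_iff finite_subset by metis
qed

lemma coll_card:
  assumes "finite E"
  shows "real (collisions E S) = (\<Sum>e\<in>E. Zi e S)"
proof -
  have "{e \<in> E. \<forall>x\<in>e. \<forall>y\<in>e. S x = S y} = {e \<in> E. coll e S}" unfolding coll_def by (rule refl)
  then have "real (collisions E S) = real (card {e \<in> E. coll e S})" unfolding collisions_def by simp
  also have "\<dots> = (\<Sum>e\<in>{e \<in> E. coll e S}. 1)" by simp
  also have "\<dots> = (\<Sum>e\<in>E. Zi e S)"
    unfolding Zi_def using sum.inter_filter[OF assms, of "\<lambda>_. (1::real)" "\<lambda>e. coll e S"] by simp
  finally show ?thesis .
qed



lemma sum_pairs:
  fixes a b :: real
  assumes fE: "finite E"
  shows "(\<Sum>e\<in>E. \<Sum>f\<in>E. (if e = f then a else 0) + (if (e, f) \<in> {(e,f) \<in> E \<times> E. e \<noteq> f \<and> e \<inter> f \<noteq> {}} then b else 0))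
    = real (card E) * a + real (card {(e,f) \<in> E \<times> E. e \<noteq> f \<and> e \<inter> f \<noteq> {}}) * b"
proof -
  let ?Q = "{(e,f) \<in> E \<times> E. e \<noteq> f \<and> e \<inter> f \<noteq> {}}"
  have 1: "(\<Sum>e\<in>E. \<Sum>f\<in>E. (if e = f then a else 0)) = real (card E) * a"
    using fE by (simp add: sum.delta)
  have "(\<Sum>e\<in>E. \<Sum>f\<in>E. (if (e, f) \<in> ?Q then b else 0)) = (\<Sum>(e,f)\<in>E \<times> E. (if (e, f) \<in> ?Q then b else 0))"
    by (rule sum.cartesian_product)
  also have "\<dots> = (\<Sum>p\<in>E \<times> E. (if p \<in> ?Q then b else 0))"
    by (rule sum.cong[OF refl]) (simp add: case_prod_beta)
  also have "\<dots> = (\<Sum>p\<in>(E \<times> E) \<inter> ?Q. b)"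
    by (rule sum.inter_restrict[symmetric]) (simp add: fE)
  also have "(E \<times> E) \<inter> ?Q = ?Q" by (rule Int_absorb1) (rule subsetI, simp add: case_prod_beta mem_Times_iff)
  finally have 2: "(\<Sum>e\<in>E. \<Sum>f\<in>E. (if (e, f) \<in> ?Q then b else 0)) = real (card ?Q) * b" by simp
  show ?thesis using 1 2 by (simp add: sum.distrib)
qed

lemma other_vertex:
  assumes G: "comparison_graph V E" and eE: "e \<in> E" and x: "x \<in> e"
  shows "\<exists>u. u \<in> V \<and> u \<noteq> x \<and> e = {u, x}"
proof -
  obtain a b where ab: "a \<in> V" "b \<in> V" "a \<noteq> b" "e = {a, b}" by (rule edge_ex[OF G eE])
  show ?thesis
  proof (cases "x = a")
    case True
    then have "b \<in> V \<and> b \<noteq> x \<and> e = {b, x}" using ab by (simp add: insert_commute)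
    then show ?thesis by (rule exI)
  next
    case False
    then have "x = b" using x ab(4) by simp
    then have "a \<in> V \<and> a \<noteq> x \<and> e = {a, x}" using ab by simp
    then show ?thesis by (rule exI)
  qed
qed

lemma card_Q_le:
  assumes G: "comparison_graph V E"
  shows "card {(e,f) \<in> E \<times> E. e \<noteq> f \<and> e \<inter> f \<noteq> {}} \<le> cG V E"
proof -
  let ?T = "{(u, v, w). u \<in> V \<and> v \<in> V \<and> w \<in> V \<and> u \<noteq> v \<and> v \<noteq> w \<and> u \<noteq> w
                 \<and> {u, v} \<in> E \<and> {v, w} \<in> E}"
  let ?Q = "{(e,f) \<in> E \<times> E. e \<noteq> f \<and> e \<inter> f \<noteq> {}}"
  let ?h = "\<lambda>(u, v, w). ({u, v}, {v, w})"
  have fV: "finite V" by (rule graph_facts(1)[OF G])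
  have fT: "finite ?T"
  proof (rule finite_subset[of _ "V \<times> V \<times> V"])
    show "?T \<subseteq> V \<times> V \<times> V"
    proof
      fix t assume t: "t \<in> ?T"
      obtain u v w where "t = (u, v, w)" by (cases t)
      then show "t \<in> V \<times> V \<times> V" using t by simp
    qed
    show "finite (V \<times> V \<times> V)" using fV by simp
  qed
  have "?Q \<subseteq> ?h ` ?T"
  proof
    fix p assume pQ: "p \<in> ?Q"
    obtain e f where pef: "p = (e, f)" by (cases p)
    have p: "e \<in> E" "f \<in> E" "e \<noteq> f" "e \<inter> f \<noteq> {}" using pQ pef by simp_all
    have "\<exists>x. x \<in> e \<inter> f" by (rule iffD2[OF ex_in_conv p(4)])
    then obtain x where x: "x \<in> e \<inter> f" by (rule exE)
    have xe: "x \<in> e" and xf: "x \<in> f" using x by simp_all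
    obtain u where u: "u \<in> V" "u \<noteq> x" "e = {u, x}" using other_vertex[OF G p(1) xe] by (elim exE conjE)
    obtain w where w: "w \<in> V" "w \<noteq> x" "f = {w, x}" using other_vertex[OF G p(2) xf] by (elim exE conjE)
    have xV: "x \<in> V" using graph_facts(3)[OF G p(1)] xe by (elim conjE) (rule subsetD)
    have uw: "u \<noteq> w"
    proof
      assume "u = w" then have "e = f" using u(3) w(3) by simp
      then show False using p(3) by simp
    qed
    have fx: "{x, w} = f" using w(3) by (simp add: insert_commute)
    have ex: "{u, x} = e" using u(3) by simp
    have "(u, x, w) \<in> ?T" using u(1,2) w(1,2) uw xV p(1,2) ex fx by simp
    moreover have "p = ?h (u, x, w)" using pef ex fx by simp
    ultimately show "p \<in> ?h ` ?T" by (rule rev_image_eqI)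
  qed
  then have "card ?Q \<le> card (?h ` ?T)"
    by (rule card_mono[OF finite_imageI[OF fT]])
  also have "\<dots> \<le> card ?T" by (rule card_image_le[OF fT])
  finally show ?thesis unfolding cG_def .
qed



lemma card_union3:
  assumes e: "finite e" "card e = 2" and f: "finite f" "card f = 2" and ne: "e \<noteq> f" and i: "e \<inter> f \<noteq> {}"
  shows "card (e \<union> f) = 3"
proof -
  have "e \<inter> f \<noteq> e"
  proof
    assume "e \<inter> f = e"
    then have "e \<subseteq> f" using Int_lower2[of e f] by simp
    then have "e = f" using card_subset_eq[OF f(1)] e(2) f(2) by simp
    then show False using ne by simp
  qed
  then have "e \<inter> f \<subset> e" by (simp add: psubset_eq)
  then have "card (e \<inter> f) < card e" by (rule psubset_card_mono[OF e(1)])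
  moreover have "card (e \<inter> f) > 0" using i e(1) by (simp add: card_gt_0_iff)
  ultimately have "card (e \<inter> f) = 1" using e(2) by simp
  moreover have "card e + card f = card (e \<union> f) + card (e \<inter> f)" by (rule card_Un_Int[OF e(1) f(1)])
  ultimately show ?thesis using e(2) f(2) by simp
qed

lemma pair_moment:
  fixes P :: "nat \<Rightarrow> real"
  assumes G: "comparison_graph V E" and sP: "sum P {1..n} = 1" and eE: "e \<in> E" and fE: "f \<in> E"
  shows "(\<Sum>S\<in>V \<rightarrow>\<^sub>E {1..n}. (\<Prod>v\<in>V. P (S v)) * (Zi e S * Zi f S))
     = (muP n P)^2 + ((if e = f then muP n P - (muP n P)^2 else 0)
         + (if (e, f) \<in> {(e,f) \<in> E \<times> E. e \<noteq> f \<and> e \<inter> f \<noteq> {}} then gammaP n P - (muP n P)^2 else 0))"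
proof -
  have fV: "finite V" by (rule graph_facts(1)[OF G])
  have e: "e \<subseteq> V" "e \<noteq> {}" "card e = 2" using graph_facts(3)[OF G eE] by simp_all
  have f: "f \<subseteq> V" "f \<noteq> {}" "card f = 2" using graph_facts(3)[OF G fE] by simp_all
  have fe: "finite e" using e(3) by (simp add: card_ge_0_finite)
  have ff: "finite f" using f(3) by (simp add: card_ge_0_finite)
  show ?thesis
  proof (cases "e \<inter> f = {}")
    case True
    then have ne: "e \<noteq> f" using e(2) by auto
    have nQ: "(e, f) \<notin> {(e,f) \<in> E \<times> E. e \<noteq> f \<and> e \<inter> f \<noteq> {}}" using True by simp
    have K: "(\<Sum>S\<in>V \<rightarrow>\<^sub>E {1..n}. (\<Prod>v\<in>V. P (S v)) * (Zi e S * Zi f S)) = muP n P * muP n P"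
      using E_Zi2[OF fV e(1,2) f(1,2) True sP] e(3) f(3) unfolding muP_def by simp
    show ?thesis unfolding if_not_P[OF ne] if_not_P[OF nQ] K by (simp add: power2_eq_square)
  next
    case False
    have U: "e \<union> f \<subseteq> V" "e \<union> f \<noteq> {}" using e f by auto
    have "(\<Sum>S\<in>V \<rightarrow>\<^sub>E {1..n}. (\<Prod>v\<in>V. P (S v)) * (Zi e S * Zi f S))
        = (\<Sum>S\<in>V \<rightarrow>\<^sub>E {1..n}. (\<Prod>v\<in>V. P (S v)) * Zi (e \<union> f) S)"
      using Zi_union[OF False] by simp
    also have "\<dots> = (\<Sum>i\<in>{1..n}. P i ^ card (e \<union> f))" by (rule E_Zi[OF fV U sP])
    finally have K: "(\<Sum>S\<in>V \<rightarrow>\<^sub>E {1..n}. (\<Prod>v\<in>V. P (S v)) * (Zi e S * Zi f S)) = (\<Sum>i\<in>{1..n}. P i ^ card (e \<union> f))" .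
    show ?thesis
    proof (cases "e = f")
      case True
      then show ?thesis using K e(3) unfolding muP_def by simp
    next
      case ne: False
      have "card (e \<union> f) = 3" by (rule card_union3[OF fe e(3) ff f(3) ne False])
      moreover have Q: "(e, f) \<in> {(e,f) \<in> E \<times> E. e \<noteq> f \<and> e \<inter> f \<noteq> {}}" using eE fE ne False by simp
      ultimately show ?thesis unfolding if_not_P[OF ne] if_P[OF Q] K gammaP_def by simp
    qed
  qed
qed



lemma moment1:
  fixes P :: "nat \<Rightarrow> real"
  assumes G: "comparison_graph V E" and sP: "sum P {1..n} = 1"
  shows "(\<Sum>S\<in>V \<rightarrow>\<^sub>E {1..n}. (\<Prod>v\<in>V. P (S v)) * real (collisions E S)) = real (card E) * muP n P"
proof -
  have fV: "finite V" by (rule graph_facts(1)[OF G])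
  have fE: "finite E" by (rule graph_facts(2)[OF G])
  have "(\<Sum>S\<in>V \<rightarrow>\<^sub>E {1..n}. (\<Prod>v\<in>V. P (S v)) * real (collisions E S))
      = (\<Sum>S\<in>V \<rightarrow>\<^sub>E {1..n}. \<Sum>e\<in>E. (\<Prod>v\<in>V. P (S v)) * Zi e S)"
    by (simp add: coll_card[OF fE] sum_distrib_left)
  also have "\<dots> = (\<Sum>e\<in>E. \<Sum>S\<in>V \<rightarrow>\<^sub>E {1..n}. (\<Prod>v\<in>V. P (S v)) * Zi e S)" by (rule sum.swap)
  also have "\<dots> = (\<Sum>e\<in>E. muP n P)"
  proof (rule sum.cong[OF refl])
    fix e assume eE: "e \<in> E"
    have e: "e \<subseteq> V" "e \<noteq> {}" "card e = 2" using graph_facts(3)[OF G eE] by simp_all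
    show "(\<Sum>S\<in>V \<rightarrow>\<^sub>E {1..n}. (\<Prod>v\<in>V. P (S v)) * Zi e S) = muP n P"
      unfolding E_Zi[OF fV e(1,2) sP] e(3) muP_def ..
  qed
  finally show ?thesis by simp
qed

lemma moment2:
  fixes P :: "nat \<Rightarrow> real"
  assumes G: "comparison_graph V E" and sP: "sum P {1..n} = 1"
  shows "(\<Sum>S\<in>V \<rightarrow>\<^sub>E {1..n}. (\<Prod>v\<in>V. P (S v)) * (real (collisions E S))^2)
    = real (card E) * real (card E) * (muP n P)^2 + (real (card E) * (muP n P - (muP n P)^2)
       + real (card {(e,f) \<in> E \<times> E. e \<noteq> f \<and> e \<inter> f \<noteq> {}}) * (gammaP n P - (muP n P)^2))"
proof -
  have fV: "finite V" by (rule graph_facts(1)[OF G])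
  have fE: "finite E" by (rule graph_facts(2)[OF G])
  let ?Q = "{(e,f) \<in> E \<times> E. e \<noteq> f \<and> e \<inter> f \<noteq> {}}"
  have "(\<Sum>S\<in>V \<rightarrow>\<^sub>E {1..n}. (\<Prod>v\<in>V. P (S v)) * (real (collisions E S))^2)
      = (\<Sum>S\<in>V \<rightarrow>\<^sub>E {1..n}. \<Sum>e\<in>E. \<Sum>f\<in>E. (\<Prod>v\<in>V. P (S v)) * (Zi e S * Zi f S))"
  proof (rule sum.cong[OF refl])
    fix S
    have sq: "(\<Sum>e\<in>E. Zi e S)^2 = (\<Sum>e\<in>E. \<Sum>f\<in>E. Zi e S * Zi f S)"
      by (simp only: power2_eq_square sum_product)
    show "(\<Prod>v\<in>V. P (S v)) * (real (collisions E S))^2 = (\<Sum>e\<in>E. \<Sum>f\<in>E. (\<Prod>v\<in>V. P (S v)) * (Zi e S * Zi f S))"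
      unfolding coll_card[OF fE] sq by (simp add: sum_distrib_left)
  qed
  also have "\<dots> = (\<Sum>e\<in>E. \<Sum>S\<in>V \<rightarrow>\<^sub>E {1..n}. \<Sum>f\<in>E. (\<Prod>v\<in>V. P (S v)) * (Zi e S * Zi f S))"
    by (rule sum.swap)
  also have "\<dots> = (\<Sum>e\<in>E. \<Sum>f\<in>E. \<Sum>S\<in>V \<rightarrow>\<^sub>E {1..n}. (\<Prod>v\<in>V. P (S v)) * (Zi e S * Zi f S))"
    by (rule sum.cong[OF refl]) (rule sum.swap)
  also have "\<dots> = (\<Sum>e\<in>E. \<Sum>f\<in>E. (muP n P)^2 + ((if e = f then muP n P - (muP n P)^2 else 0)
         + (if (e, f) \<in> ?Q then gammaP n P - (muP n P)^2 else 0)))"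
    by (intro sum.cong[OF refl]) (rule pair_moment[OF G sP])
  also have "\<dots> = (\<Sum>e\<in>E. \<Sum>f\<in>E. (muP n P)^2) + (\<Sum>e\<in>E. \<Sum>f\<in>E. (if e = f then muP n P - (muP n P)^2 else 0)
         + (if (e, f) \<in> ?Q then gammaP n P - (muP n P)^2 else 0))"
    by (simp add: sum.distrib)
  also have "\<dots> = real (card E) * real (card E) * (muP n P)^2 + (real (card E) * (muP n P - (muP n P)^2)
       + real (card ?Q) * (gammaP n P - (muP n P)^2))"
    unfolding sum_pairs[OF fE] by simp
  finally show ?thesis .
qed



lemma key_ineq:
  fixes \<epsilon> \<delta> g nn :: real
  assumes e: "0 < \<epsilon>" "\<epsilon> \<le> 1" and nn: "nn \<ge> 1" and d: "\<delta> \<ge> \<epsilon>^2 / nn"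
    and g: "g \<le> \<delta> / nn + sqrt \<delta> * \<delta>"
  shows "\<epsilon>^2 * g \<le> 2 * sqrt nn * \<delta>^2"
proof -
  have nn0: "nn > 0" using nn by simp
  have d1: "\<epsilon>^2 \<le> nn * \<delta>" using d nn0 by (simp add: field_simps)
  have "\<epsilon>^2 / nn \<ge> 0" using nn0 by simp
  then have d0: "\<delta> \<ge> 0" using d by linarith
  have sn: "sqrt nn \<ge> 1" using nn by simp
  have "\<epsilon> = sqrt (\<epsilon>^2)" using e by simp
  also have "\<dots> \<le> sqrt (nn * \<delta>)" using d1 by (rule real_sqrt_le_mono)
  finally have es: "\<epsilon> \<le> sqrt nn * sqrt \<delta>" by (simp add: real_sqrt_mult)
  have e2: "\<epsilon>^2 \<le> \<epsilon>" using e by (simp add: power2_eq_square mult_left_le)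
  have t1: "\<epsilon>^2 * (\<delta> / nn) \<le> sqrt nn * \<delta>^2"
  proof -
    have "\<epsilon>^2 * (\<delta> / nn) \<le> (nn * \<delta>) * (\<delta> / nn)" using d1 d0 nn0 by (intro mult_right_mono) simp_all
    also have "\<dots> = \<delta>^2" using nn0 by (simp add: power2_eq_square)
    also have "\<dots> \<le> sqrt nn * \<delta>^2" using sn by (simp add: mult_le_cancel_right1)
    finally show ?thesis .
  qed
  have t2: "\<epsilon>^2 * (sqrt \<delta> * \<delta>) \<le> sqrt nn * \<delta>^2"
  proof -
    have "\<epsilon>^2 * (sqrt \<delta> * \<delta>) \<le> (sqrt nn * sqrt \<delta>) * (sqrt \<delta> * \<delta>)"
      using e2 es d0 by (intro mult_right_mono) simp_all
    also have "\<dots> = sqrt nn * \<delta>^2" using d0 by (simp add: power2_eq_square)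
    finally show ?thesis .
  qed
  have "\<epsilon>^2 * g \<le> \<epsilon>^2 * (\<delta> / nn + sqrt \<delta> * \<delta>)" using g by (intro mult_left_mono) simp_all
  also have "\<dots> \<le> 2 * sqrt nn * \<delta>^2" using t1 t2 by (simp add: distrib_left)
  finally show ?thesis .
qed

theorem lemma11:
  fixes n :: nat and \<epsilon> \<tau> :: real and V :: "'a set" and E :: "'a set set"
    and P :: "nat \<Rightarrow> real"
  assumes "n \<ge> 1" and "0 < \<epsilon>" and "\<epsilon> \<le> 1" and "0 \<le> \<tau>" and "\<tau> < 1"
    and "comparison_graph V E" and "card E \<ge> 1"
    and "is_distr n P" and "dist_unif n P \<ge> \<epsilon>"
    and "real (card E) * (muP n P - (muP n P)^2) < real (cG V E) * (gammaP n P - (muP n P)^2)"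
    and "real (cG V E) \<le> (real (card E))^2 * (1 - \<tau>)^2 * \<epsilon>^2 / (16 * sqrt (real n))"
  shows "prob_yes n P \<tau> \<epsilon> V E \<le> 1 / 4"
proof -
  note n = assms(1) and e = assms(2,3) and t = assms(4,5) and G = assms(6) and cE = assms(7)
    and d = assms(8) and du = assms(9) and hyp = assms(10) and hc = assms(11)
  let ?\<Omega> = "V \<rightarrow>\<^sub>E {1..n}"
  define w where "w S = (\<Prod>v\<in>V. P (S v))" for S
  define Z where "Z S = real (collisions E S)" for S
  define \<mu> where "\<mu> = muP n P"
  define \<gamma> where "\<gamma> = gammaP n P"
  define k where "k = real (card E)"
  define c where "c = real (cG V E)"
  define N where "N = real (card {(e,f) \<in> E \<times> E. e \<noteq> f \<and> e \<inter> f \<noteq> {}})"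
  define \<delta> where "\<delta> = \<mu> - 1 / real n"
  define m where "m = k * \<mu>"
  define T where "T = k * (1 + \<tau> * \<epsilon>^2) / real n"
  define dd where "dd = m - T"
  have nr: "real n > 0" using n by simp
  have sP: "sum P {1..n} = 1" and P0: "\<And>i. i \<in> {1..n} \<Longrightarrow> P i \<ge> 0"
    using d unfolding is_distr_def by auto
  have fV: "finite V" by (rule graph_facts(1)[OF G])
  have k1: "k \<ge> 1" using cE unfolding k_def by simp
  have sw: "(\<Sum>S\<in>?\<Omega>. w S) = 1" unfolding w_def by (rule sum_w[OF fV sP])
  have w0: "w S \<ge> 0" if "S \<in> ?\<Omega>" for S
    unfolding w_def using that P0 by (intro prod_nonneg) (auto simp: PiE_def Pi_def)
  have E1: "(\<Sum>S\<in>?\<Omega>. w S * Z S) = m" unfolding w_def Z_def m_def k_def \<mu>_def by (rule moment1[OF G sP])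
  have E2: "(\<Sum>S\<in>?\<Omega>. w S * (Z S)^2) = k * k * \<mu>^2 + (k * (\<mu> - \<mu>^2) + N * (\<gamma> - \<mu>^2))"
    unfolding w_def Z_def k_def \<mu>_def N_def \<gamma>_def by (rule moment2[OF G sP])
  have NC: "N \<le> c" unfolding N_def c_def using card_Q_le[OF G] by simp
  have an1: "\<delta> \<ge> (dist_unif n P)^2 / real n" unfolding \<delta>_def \<mu>_def by (rule analytic(1)[OF n d])
  have an2: "\<gamma> - \<mu>^2 \<le> \<delta> / real n + sqrt \<delta> * \<delta>" unfolding \<delta>_def \<mu>_def \<gamma>_def by (rule analytic(2)[OF n d])
  have an3: "\<mu> \<le> 1" unfolding \<mu>_def by (rule analytic(3)[OF n d])
  have mu0: "\<mu> \<ge> 0" unfolding \<mu>_def muP_def by (rule sum_nonneg) simp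
  have "\<epsilon>^2 \<le> (dist_unif n P)^2" using du e by (intro power_mono) simp_all
  then have "\<epsilon>^2 / real n \<le> (dist_unif n P)^2 / real n" using nr by (intro divide_right_mono) simp_all
  then have dl: "\<delta> \<ge> \<epsilon>^2 / real n" using an1 by linarith
  have "\<epsilon>^2 / real n > 0" using e nr by simp
  then have dpos: "\<delta> > 0" using dl by linarith
  have "\<tau> * (\<epsilon>^2 / real n) \<le> \<tau> * \<delta>" using dl t by (intro mult_left_mono) simp_all
  then have "(1 - \<tau>) * \<delta> \<le> \<delta> - \<tau> * (\<epsilon>^2 / real n)" by (simp add: algebra_simps)
  then have "k * ((1 - \<tau>) * \<delta>) \<le> k * (\<delta> - \<tau> * (\<epsilon>^2 / real n))" using k1 by (intro mult_left_mono) simp_all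
  moreover have "dd = k * (\<delta> - \<tau> * (\<epsilon>^2 / real n))"
    unfolding dd_def m_def T_def \<delta>_def using nr by (simp add: field_simps)
  ultimately have ddl: "dd \<ge> k * ((1 - \<tau>) * \<delta>)" by simp
  have ddl0: "k * ((1 - \<tau>) * \<delta>) > 0" using k1 t dpos by simp
  have ddpos: "dd > 0" using ddl ddl0 by linarith
  have var: "(\<Sum>S\<in>?\<Omega>. w S * (Z S - m)^2) = k * (\<mu> - \<mu>^2) + N * (\<gamma> - \<mu>^2)"
  proof -
    have "(\<Sum>S\<in>?\<Omega>. w S * (Z S - m)^2) = (\<Sum>S\<in>?\<Omega>. w S * (Z S)^2 + (- 2 * m) * (w S * Z S) + m^2 * w S)"
      by (rule sum.cong[OF refl]) (simp add: power2_eq_square algebra_simps)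
    also have "\<dots> = (\<Sum>S\<in>?\<Omega>. w S * (Z S)^2) + (- 2 * m) * (\<Sum>S\<in>?\<Omega>. w S * Z S) + m^2 * (\<Sum>S\<in>?\<Omega>. w S)"
      unfolding sum.distrib sum_distrib_left[symmetric] ..
    also have "\<dots> = k * (\<mu> - \<mu>^2) + N * (\<gamma> - \<mu>^2)"
      unfolding E2 E1 sw m_def by (simp add: power2_eq_square algebra_simps)
    finally show ?thesis .
  qed
  have mm0: "\<mu> - \<mu>^2 \<ge> 0" using an3 mu0 by (simp add: power2_eq_square mult_left_le)
  have hyp': "k * (\<mu> - \<mu>^2) < c * (\<gamma> - \<mu>^2)" using hyp unfolding k_def c_def \<mu>_def \<gamma>_def .
  have c0: "c \<ge> 0" unfolding c_def by simp
  have g0: "\<gamma> - \<mu>^2 > 0"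
  proof (rule ccontr)
    assume "\<not> ?thesis"
    then have "c * (\<gamma> - \<mu>^2) \<le> 0" using c0 by (simp add: mult_nonneg_nonpos)
    moreover have "k * (\<mu> - \<mu>^2) \<ge> 0" using k1 mm0 by simp
    ultimately show False using hyp' by linarith
  qed
  have V1: "k * (\<mu> - \<mu>^2) + N * (\<gamma> - \<mu>^2) \<le> 2 * c * (\<gamma> - \<mu>^2)"
  proof -
    have "N * (\<gamma> - \<mu>^2) \<le> c * (\<gamma> - \<mu>^2)" using NC g0 by (intro mult_right_mono) simp_all
    then show ?thesis using hyp' by linarith
  qed
  have key: "\<epsilon>^2 * (\<gamma> - \<mu>^2) \<le> 2 * sqrt (real n) * \<delta>^2"
    by (rule key_ineq[OF e _ dl an2]) (use n in simp)
  have sn: "sqrt (real n) > 0" using nr by simp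
  have hc': "c \<le> k^2 * (1 - \<tau>)^2 * \<epsilon>^2 / (16 * sqrt (real n))" using hc unfolding c_def k_def .
  have V2: "2 * c * (\<gamma> - \<mu>^2) \<le> (k * ((1 - \<tau>) * \<delta>))^2 / 4"
  proof -
    have "2 * c * (\<gamma> - \<mu>^2) \<le> 2 * (k^2 * (1 - \<tau>)^2 * \<epsilon>^2 / (16 * sqrt (real n))) * (\<gamma> - \<mu>^2)"
    proof (rule mult_right_mono)
      show "2 * c \<le> 2 * (k^2 * (1 - \<tau>)^2 * \<epsilon>^2 / (16 * sqrt (real n)))" using hc' by linarith
    qed (use g0 in simp)
    also have "\<dots> = k^2 * (1 - \<tau>)^2 * (\<epsilon>^2 * (\<gamma> - \<mu>^2)) / (8 * sqrt (real n))"
      by (simp add: field_simps)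
    also have "\<dots> \<le> k^2 * (1 - \<tau>)^2 * (2 * sqrt (real n) * \<delta>^2) / (8 * sqrt (real n))"
      using key sn by (intro divide_right_mono mult_left_mono) simp_all
    also have "\<dots> = (k * ((1 - \<tau>) * \<delta>))^2 / 4" using sn by (simp add: field_simps power2_eq_square)
    finally show ?thesis .
  qed
  \<comment> \<open>Chebyshev\<close>
  have "prob_yes n P \<tau> \<epsilon> V E = (\<Sum>S\<in>?\<Omega>. if Z S < T then w S else 0)"
    unfolding prob_yes_def outputs_yes_def w_def Z_def T_def k_def ..
  also have "\<dots> \<le> (\<Sum>S\<in>?\<Omega>. w S * (Z S - m)^2 / dd^2)"
  proof (rule sum_mono)
    fix S assume S: "S \<in> ?\<Omega>"
    show "(if Z S < T then w S else 0) \<le> w S * (Z S - m)^2 / dd^2"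
    proof (cases "Z S < T")
      case True
      then have "m - Z S \<ge> dd" unfolding dd_def by simp
      then have "dd^2 \<le> (m - Z S)^2" using ddpos by (intro power_mono) simp_all
      then have "dd^2 \<le> (Z S - m)^2" by (simp add: power2_commute)
      then have "1 \<le> (Z S - m)^2 / dd^2" using ddpos by simp
      then have "w S * 1 \<le> w S * ((Z S - m)^2 / dd^2)" using w0[OF S] by (intro mult_left_mono) simp_all
      then show ?thesis using True by simp
    next
      case False
      then show ?thesis using w0[OF S] by simp
    qed
  qed
  also have "\<dots> = (\<Sum>S\<in>?\<Omega>. w S * (Z S - m)^2) / dd^2" by (simp add: sum_divide_distrib)
  also have "\<dots> = (k * (\<mu> - \<mu>^2) + N * (\<gamma> - \<mu>^2)) / dd^2" unfolding var ..
  also have "\<dots> \<le> ((k * ((1 - \<tau>) * \<delta>))^2 / 4) / dd^2"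
    using V1 V2 ddpos by (intro divide_right_mono) simp_all
  also have "\<dots> \<le> ((k * ((1 - \<tau>) * \<delta>))^2 / 4) / (k * ((1 - \<tau>) * \<delta>))^2"
  proof (rule divide_left_mono)
    show "(k * ((1 - \<tau>) * \<delta>))^2 \<le> dd^2" by (rule power_mono[OF ddl]) (use ddl0 in linarith)
    show "0 \<le> (k * ((1 - \<tau>) * \<delta>))^2 / 4" by simp
    show "0 < dd^2 * (k * ((1 - \<tau>) * \<delta>))^2"
      by (rule mult_pos_pos) (rule zero_less_power, fact)+
  qed
  also have "\<dots> = 1 / 4"
  proof -
    have q: "x \<noteq> 0 \<Longrightarrow> (x^2 / 4) / x^2 = (1::real) / 4" for x by simp
    have "k * ((1 - \<tau>) * \<delta>) \<noteq> 0"
    proof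
      assume "k * ((1 - \<tau>) * \<delta>) = 0" then show False using ddl0 by (metis less_irrefl)
    qed
    then show ?thesis by (rule q)
  qed
  finally show ?thesis .
qed


end
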